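(* Let $n\ge3$. In $\mathrm{YTL}_{d,n}(u)$ we have (1) $(t_i-t_j)(t_i-t_k)(t_j-t_k)=0$ for all $1\le i,j,k\le n$; and (2) $(t_j-t_i)(t_j-t_{i+1})(g_i+1)=0$ for all $1\le i\le n-1$ and $1\le j\le n$.
   Context: Let $d,n\ge1$ be integers and $u$ an indeterminate. The Yokonuma–Hecke algebra $\mathrm{Y}_{d,n}(u)$ is the associative $\mathbb{C}[u,u^{-1}]$-algebra generated by $g_1,\dots,g_{n-1},t_1,\dots,t_n$ subject to: $g_ig_j=g_jg_i$ for $|i-j|>1$; $g_ig_{i+1}g_i=g_{i+1}g_ig_{i+1}$ for $1\le i\le n-2$; $t_it_j=t_jt_i$ for all $i,j$; $t_jg_i=g_it_{s_i(j)}$ for all $i,j$, where $s_i$ is the transposition $(i,i+1)$; $t_j^d=1$ for all $j$; and $g_i^2=1+(u-1)e_i+(u-1)e_ig_i$, where $e_i=\frac1d\sum_{s=0}^{d-1}t_i^st_{i+1}^{-s}$. For $n\ge3$, the Yokonuma–Temperley–Lieb algebra $\mathrm{YTL}_{d,n}(u)$ is the quotient of $\mathrm{Y}_{d,n}(u)$ by the two-sided ideal generated by the elements $g_ig_{i+1}g_i+g_ig_{i+1}+g_{i+1}g_i+g_i+g_{i+1}+1$, $1\le i\le n-2$; images of the generators in the quotient are denoted by the same letters. *)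

theory Defs
  imports Complex_Main
begin

definition s_tr :: "nat \<Rightarrow> nat \<Rightarrow> nat" where
  "s_tr i j = (if j = i then i + 1 else if j = i + 1 then i else j)"

(* A unital C[u,u^{-1}]-algebra structure on a ring 'a:
   phi : C -> 'a is a unital ring homomorphism with central image,
   u is a central unit of 'a.  (This is exactly a unital C[u,u^{-1}]-algebra.) *)
definition laurent_alg :: "(complex \<Rightarrow> 'a::ring_1) \<Rightarrow> 'a \<Rightarrow> bool" where
  "laurent_alg phi u \<longleftrightarrow>
     phi 1 = 1 \<and> (\<forall>a b. phi (a + b) = phi a + phi b) \<and> (\<forall>a b. phi (a * b) = phi a * phi b) \<and>
     (\<forall>a x. phi a * x = x * phi a) \<and>
     (\<forall>x. u * x = x * u) \<and> (\<exists>v. u * v = 1 \<and> v * u = 1)"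

(* e_i = (1/d) sum_{s=0}^{d-1} t_i^s t_{i+1}^{-s}; since t_{i+1}^d = 1,
   the inverse of t_{i+1}^s is t_{i+1}^(d-s). *)
definition e_idem :: "(complex \<Rightarrow> 'a::ring_1) \<Rightarrow> nat \<Rightarrow> (nat \<Rightarrow> 'a) \<Rightarrow> nat \<Rightarrow> 'a" where
  "e_idem phi d t i = phi (1 / of_nat d) * (\<Sum>s<d. t i ^ s * t (i + 1) ^ (d - s))"

definition YTL_rels ::
  "(complex \<Rightarrow> 'a::ring_1) \<Rightarrow> 'a \<Rightarrow> nat \<Rightarrow> nat \<Rightarrow> (nat \<Rightarrow> 'a) \<Rightarrow> (nat \<Rightarrow> 'a) \<Rightarrow> bool" where
  "YTL_rels phi u d n g t \<longleftrightarrow>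
     (\<forall>i j. 1 \<le> i \<and> i \<le> n - 1 \<and> 1 \<le> j \<and> j \<le> n - 1 \<and> (i + 1 < j \<or> j + 1 < i)
        \<longrightarrow> g i * g j = g j * g i) \<and>
     (\<forall>i. 1 \<le> i \<and> i \<le> n - 2 \<longrightarrow> g i * g (i+1) * g i = g (i+1) * g i * g (i+1)) \<and>
     (\<forall>i j. 1 \<le> i \<and> i \<le> n \<and> 1 \<le> j \<and> j \<le> n \<longrightarrow> t i * t j = t j * t i) \<and>
     (\<forall>i j. 1 \<le> i \<and> i \<le> n - 1 \<and> 1 \<le> j \<and> j \<le> n \<longrightarrow> t j * g i = g i * t (s_tr i j)) \<and>
     (\<forall>j. 1 \<le> j \<and> j \<le> n \<longrightarrow> t j ^ d = 1) \<and>
     (\<forall>i. 1 \<le> i \<and> i \<le> n - 1 \<longrightarrow>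
        g i * g i = 1 + (u - 1) * e_idem phi d t i + (u - 1) * e_idem phi d t i * g i) \<and>
     (\<forall>i. 1 \<le> i \<and> i \<le> n - 2 \<longrightarrow>
        g i * g (i+1) * g i + g i * g (i+1) + g (i+1) * g i + g i + g (i+1) + 1 = 0)"

end

theory Submission imports Defs begin
lemma S_sq:
  fixes a b :: "'a::ring_1" and d :: nat
  assumes ab: "a*b = b*a" and ad: "a^d = 1" and bd: "b^d = 1" and d1: "d \<ge> 1"
  defines "S \<equiv> (\<Sum>s<d. a^s * b^(d-s))"
  shows "S * S = of_nat d * S"
proof -
  obtain d' where dd: "d = Suc d'" using d1 by (cases d) auto
  have aS: "a * S = (\<Sum>s<d'. a^(Suc s) * b^(d-s)) + b"
  proof -
    have "a * S = (\<Sum>s<d. a^(Suc s) * b^(d-s))"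
      unfolding S_def by (simp add: sum_distrib_left mult.assoc)
    also have "\<dots> = (\<Sum>s<d'. a^(Suc s) * b^(d-s)) + a^d * b^(d-d')"
      by (simp add: dd)
    also have "a^d * b^(d-d') = b" using ad dd by simp
    finally show ?thesis .
  qed
  have bS: "b * S = (\<Sum>s<d'. a^(Suc s) * b^(d-s)) + b"
  proof -
    have c: "\<And>s. b * a^s = a^s * b" using power_commuting_commutes[of a b] ab by metis
    have "b * S = (\<Sum>s<d. a^s * b^(Suc (d-s)))"
      unfolding S_def by (simp add: sum_distrib_left mult.assoc[symmetric] c)
    also have "\<dots> = a^0 * b^(Suc (d - 0)) + (\<Sum>s<d'. a^(Suc s) * b^(Suc (d - Suc s)))"
      unfolding dd by (subst sum.lessThan_Suc_shift) simp
    also have "(\<Sum>s<d'. a^(Suc s) * b^(Suc (d - Suc s))) = (\<Sum>s<d'. a^(Suc s) * b^(d-s))"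
      by (rule sum.cong) (auto simp: dd Suc_diff_Suc Suc_diff_le)
    also have "a^0 * b^(Suc (d - 0)) = b" using bd by simp
    finally show ?thesis by (simp add: add.commute)
  qed
  have abS: "a * S = b * S" using aS bS by simp
  have pw: "a^k * S = b^k * S" for k
  proof (induction k)
    case (Suc k)
    have "a^Suc k * S = a * (a^k * S)" by (simp add: mult.assoc)
    also have "\<dots> = a * (b^k * S)" using Suc by simp
    also have "\<dots> = b^k * (a * S)"
      using power_commuting_commutes[of b a k] ab by (metis mult.assoc)
    also have "\<dots> = b^k * (b * S)" using abS by simp
    also have "\<dots> = b^Suc k * S" by (simp only: power_Suc2 mult.assoc)
    finally show ?case .
  qed simp
  have trm: "(a^s * b^(d-s)) * S = S" if "s < d" for s
  proof -
    have "(a^s * b^(d-s)) * S = b^(d-s) * (a^s * S)"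
      using power_commuting_commutes[of a b] ab
      by (metis mult.assoc power_commutes power_commuting_commutes)
    also have "\<dots> = b^(d-s) * (b^s * S)" using pw by simp
    also have "\<dots> = b^d * S" using that by (simp add: mult.assoc[symmetric] power_add[symmetric])
    finally show ?thesis using bd by simp
  qed
  have "S * S = (\<Sum>s<d. (a^s * b^(d-s)) * S)"
    by (subst (1) S_def) (rule sum_distrib_right)
  also have "\<dots> = (\<Sum>s<d. S)" by (rule sum.cong) (auto simp: trm)
  finally show ?thesis by simp
qed

lemma triple_calc:
 fixes a b c ga gb :: "'a::ring_1"
 assumes ba: "b*a = a*b" and ca: "c*a = a*c" and cb: "c*b=b*c"
  and aga: "a*ga = ga*b" and bga: "b*ga = ga*a" and cga: "c*ga = ga*c"
  and agb: "a*gb = gb*a" and bgb: "b*gb = gb*c" and cgb: "c*gb=gb*b"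
  and X: "ga*gb*ga + ga*gb + gb*ga + ga + gb + 1 = 0"
 shows "(a-b)*(a-c)*(b-c) = 0" "(c-a)*(c-b)*(ga+1) = 0" "(a-b)*(a-c)*(gb+1) = 0"
proof -
  have R: "\<And>r. b*(a*r) = a*(b*r)" "\<And>r. c*(a*r) = a*(c*r)" "\<And>r. c*(b*r) = b*(c*r)"
    "\<And>r. a*(ga*r) = ga*(b*r)" "\<And>r. b*(ga*r) = ga*(a*r)" "\<And>r. c*(ga*r) = ga*(c*r)"
    "\<And>r. a*(gb*r) = gb*(a*r)" "\<And>r. b*(gb*r) = gb*(c*r)" "\<And>r. c*(gb*r) = gb*(b*r)"
    by (metis mult.assoc assms)+
  note RR = R ba ca cb aga bga cga agb bgb cgb
  define Xe where "Xe = ga*gb*ga + ga*gb + gb*ga + ga + gb + 1"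
  have X0: "Xe = 0" using X Xe_def by simp
  have "(b-a)*(a-c)*(b-c) = c*(c*(b*Xe - Xe*a) - (b*Xe - Xe*a)*b) - (c*(b*Xe - Xe*a) - (b*Xe-Xe*a)*b)*a"
    unfolding Xe_def by (simp add: algebra_simps RR)
  then have "(b-a)*(a-c)*(b-c) = 0" by (simp add: X0)
  then have "-((a-b)*(a-c)*(b-c)) = 0" by (metis minus_diff_eq mult_minus_left)
  then show "(a-b)*(a-c)*(b-c) = 0" by simp
  have "(c-a)*(c-b)*(ga+1) = c*(c*Xe - Xe*b) - (c*Xe - Xe*b)*a"
    unfolding Xe_def by (simp add: algebra_simps RR)
  then show "(c-a)*(c-b)*(ga+1) = 0" by (simp add: X0)
  have "(a-b)*(a-c)*(gb+1) = a*(a*Xe - Xe*b) - (a*Xe - Xe*b)*c"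
    unfolding Xe_def by (simp add: algebra_simps RR)
  then show "(a-b)*(a-c)*(gb+1) = 0" by (simp add: X0)
qed

definition D3 :: "'a::ring_1 \<Rightarrow> 'a \<Rightarrow> 'a \<Rightarrow> 'a" where
  "D3 x y z = (x-y)*(x-z)*(y-z)"

lemma D3_swap12:
  fixes x y z :: "'a::ring_1"
  assumes "y*x = x*y" "z*x = x*z" "z*y = y*z" "D3 x y z = 0"
  shows "D3 y x z = 0"
proof -
  have R: "\<And>r. y*(x*r) = x*(y*r)" "\<And>r. z*(x*r) = x*(z*r)" "\<And>r. z*(y*r) = y*(z*r)"
    by (metis mult.assoc assms)+
  have "D3 y x z = - D3 x y z" unfolding D3_def by (simp add: algebra_simps R assms)
  then show ?thesis using assms by simp
qed

lemma D3_swap23: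
  fixes x y z :: "'a::ring_1"
  assumes "y*x = x*y" "z*x = x*z" "z*y = y*z" "D3 x y z = 0"
  shows "D3 x z y = 0"
proof -
  have R: "\<And>r. y*(x*r) = x*(y*r)" "\<And>r. z*(x*r) = x*(z*r)" "\<And>r. z*(y*r) = y*(z*r)"
    by (metis mult.assoc assms)+
  have "D3 x z y = - D3 x y z" unfolding D3_def by (simp add: algebra_simps R assms)
  then show ?thesis using assms by simp
qed

lemma push_diff: "(A::'a::ring_1)*g = g*A' \<Longrightarrow> B*g = g*B' \<Longrightarrow> (A-B)*g = g*(A'-B')"
  by (simp add: algebra_simps)
lemma push_mult: "(A::'a::ring_1)*g = g*A' \<Longrightarrow> B*g = g*B' \<Longrightarrow> (A*B)*g = g*(A'*B')"
  by (metis mult.assoc)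

context
  fixes phi :: "complex \<Rightarrow> 'a::ring_1" and u :: 'a
    and g t :: "nat \<Rightarrow> 'a" and d n :: nat
  assumes d1: "d \<ge> 1" and n3: "n \<ge> 3"
    and LA: "laurent_alg phi u"
    and YR: "YTL_rels phi u d n g t"
begin

lemma far: "1 \<le> i \<Longrightarrow> i \<le> n - 1 \<Longrightarrow> 1 \<le> j \<Longrightarrow> j \<le> n - 1 \<Longrightarrow> (i + 1 < j \<or> j + 1 < i)
        \<Longrightarrow> g i * g j = g j * g i"
  using YR unfolding YTL_rels_def by blast
lemma tcomm: "1 \<le> i \<Longrightarrow> i \<le> n \<Longrightarrow> 1 \<le> j \<Longrightarrow> j \<le> n \<Longrightarrow> t i * t j = t j * t i"
  using YR unfolding YTL_rels_def by blast
lemma tg: "1 \<le> i \<Longrightarrow> i \<le> n - 1 \<Longrightarrow> 1 \<le> j \<Longrightarrow> j \<le> n \<Longrightarrow> t j * g i = g i * t (s_tr i j)"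
  using YR unfolding YTL_rels_def by blast
lemma tpow: "1 \<le> j \<Longrightarrow> j \<le> n \<Longrightarrow> t j ^ d = 1"
  using YR unfolding YTL_rels_def by blast
lemma quad: "1 \<le> i \<Longrightarrow> i \<le> n - 1 \<Longrightarrow>
        g i * g i = 1 + (u - 1) * e_idem phi d t i + (u - 1) * e_idem phi d t i * g i"
  using YR unfolding YTL_rels_def by blast
lemma Xrel: "1 \<le> i \<Longrightarrow> i \<le> n - 2 \<Longrightarrow>
        g i * g (i+1) * g i + g i * g (i+1) + g (i+1) * g i + g i + g (i+1) + 1 = 0"
  using YR unfolding YTL_rels_def by blast

lemma phi_add: "phi (a + b) = phi a + phi b" using LA unfolding laurent_alg_def by blast
lemma phi_mult: "phi (a * b) = phi a * phi b" using LA unfolding laurent_alg_def by blast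
lemma phi_one: "phi 1 = 1" using LA unfolding laurent_alg_def by blast
lemma phi_central: "phi a * x = x * phi a" using LA unfolding laurent_alg_def by blast
lemma u_central: "u * x = x * u" using LA unfolding laurent_alg_def by blast
lemma u_unit: "\<exists>v. u * v = 1 \<and> v * u = 1" using LA unfolding laurent_alg_def by blast

lemma phi_zero: "phi 0 = 0"
proof -
  have "phi (0 + 0) = phi 0 + phi 0" by (rule phi_add)
  then show ?thesis by simp
qed

lemma phi_nat: "phi (of_nat k) = of_nat k"
  by (induction k) (simp_all add: phi_zero phi_add phi_one)

lemma e_sq: assumes "1 \<le> i" "i \<le> n - 1" shows "e_idem phi d t i * e_idem phi d t i = e_idem phi d t i"
proof -
  define S where "S = (\<Sum>s<d. t i ^ s * t (i + 1) ^ (d - s))"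
  define c where "c = phi (1 / of_nat d)"
  have SS: "S * S = of_nat d * S" unfolding S_def
    by (rule S_sq) (use assms n3 d1 in \<open>auto intro: tcomm tpow\<close>)
  have cd: "c * of_nat d = 1"
  proof -
    have "c * of_nat d = phi (1 / of_nat d * of_nat d)" unfolding c_def by (simp only: phi_mult phi_nat)
    also have "\<dots> = 1" using d1 by (simp add: phi_one)
    finally show ?thesis .
  qed
  have e: "e_idem phi d t i = c * S" unfolding e_idem_def c_def S_def by simp
  have "c * S * (c * S) = c * (c * (S * S))" by (metis c_def mult.assoc phi_central)
  also have "\<dots> = c * ((c * of_nat d) * S)" by (simp add: SS mult.assoc)
  also have "\<dots> = c * S" by (simp add: cd)
  finally show ?thesis using e by simp
qed

lemma cancel: assumes "1 \<le> m" "m \<le> n - 1" "g m * Q = 0" shows "Q = 0"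
proof -
  define e where "e = e_idem phi d t m"
  have ee: "e * e = e" unfolding e_def using e_sq assms by blast
  have "g m * (g m * Q) = 0" using assms by simp
  then have "(g m * g m) * Q = 0" by (simp add: mult.assoc)
  then have "Q + (u - 1) * (e * Q) = 0"
    using quad[OF assms(1,2)] assms(3) by (simp add: e_def[symmetric] algebra_simps)
  then have Q: "Q = - ((u - 1) * (e * Q))" by (simp add: eq_neg_iff_add_eq_0)
  have "e * Q = - (e * ((u - 1) * (e * Q)))" by (subst Q) simp
  also have "e * ((u - 1) * (e * Q)) = (u - 1) * (e * (e * Q))"
  proof -
    have "e * (u - 1) = (u - 1) * e" by (simp add: algebra_simps u_central)
    then show ?thesis by (metis mult.assoc)
  qed
  also have "e * (e * Q) = e * Q" using ee by (simp add: mult.assoc[symmetric])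
  finally have "e * Q + (u - 1) * (e * Q) = 0" by (simp add: eq_neg_iff_add_eq_0)
  then have "u * (e * Q) = 0" by (simp add: algebra_simps)
  moreover obtain v where "v * u = 1" using u_unit by blast
  ultimately have "e * Q = 0" by (metis mult.assoc mult_1 mult_zero_right)
  then show ?thesis using Q by simp
qed


lemma triple_at:
  assumes "1 \<le> i" "i \<le> n - 2"
  shows "D3 (t i) (t (i+1)) (t (i+2)) = 0"
    "(t (i+2) - t i) * (t (i+2) - t (i+1)) * (g i + 1) = 0"
    "(t i - t (i+1)) * (t i - t (i+2)) * (g (i+1) + 1) = 0"
proof -
  have h: "t (i+1) * t i = t i * t (i+1)" "t (i+2) * t i = t i * t (i+2)"
    "t (i+2) * t (i+1) = t (i+1) * t (i+2)"
    using assms n3 by (auto intro: tcomm)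
  have h2: "t i * g i = g i * t (i+1)" "t (i+1) * g i = g i * t i" "t (i+2) * g i = g i * t (i+2)"
    "t i * g (i+1) = g (i+1) * t i" "t (i+1) * g (i+1) = g (i+1) * t (i+2)"
    "t (i+2) * g (i+1) = g (i+1) * t (i+1)"
    using tg[of i i] tg[of i "i+1"] tg[of i "i+2"] tg[of "i+1" i] tg[of "i+1" "i+1"] tg[of "i+1" "i+2"]
      assms n3 by (auto simp: s_tr_def)
  note T = triple_calc[where a="t i" and b="t (i+1)" and c="t(i+2)" and ga="g i" and gb="g(i+1)",
      OF h h2 Xrel[OF assms]]
  show "D3 (t i) (t (i+1)) (t (i+2)) = 0" using T(1) unfolding D3_def .
  show "(t (i+2) - t i) * (t (i+2) - t (i+1)) * (g i + 1) = 0" using T(2) .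
  show "(t i - t (i+1)) * (t i - t (i+2)) * (g (i+1) + 1) = 0" using T(3) .
qed

lemma conjD:
  assumes "1 \<le> m" "m \<le> n - 1" "1 \<le> x" "x \<le> n" "1 \<le> y" "y \<le> n" "1 \<le> z" "z \<le> n"
    "D3 (t x) (t y) (t z) = 0"
  shows "D3 (t (s_tr m x)) (t (s_tr m y)) (t (s_tr m z)) = 0"
proof -
  have "D3 (t x) (t y) (t z) * g m = g m * D3 (t (s_tr m x)) (t (s_tr m y)) (t (s_tr m z))"
    unfolding D3_def using assms by (intro push_mult push_diff tg) auto
  then have "g m * D3 (t (s_tr m x)) (t (s_tr m y)) (t (s_tr m z)) = 0" using assms(9) by simp
  then show ?thesis using cancel[OF assms(1,2)] by blast
qed

lemma up: assumes "1 \<le> i" "i + 2 + k \<le> n" shows "D3 (t i) (t (i+1)) (t (i+2+k)) = 0"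
  using assms(2)
proof (induction k)
  case 0
  then show ?case using triple_at(1)[OF assms(1)] by simp
next
  case (Suc k)
  define m where "m = i + 2 + k"
  have IH: "D3 (t i) (t (i+1)) (t m) = 0" using Suc m_def by simp
  have s: "s_tr m i = i" "s_tr m (i+1) = i+1" "s_tr m m = i + 2 + Suc k"
    unfolding s_tr_def m_def by auto
  have "D3 (t (s_tr m i)) (t (s_tr m (i+1))) (t (s_tr m m)) = 0"
    by (rule conjD[OF _ _ _ _ _ _ _ _ IH]) (use assms Suc.prems in \<open>auto simp: m_def\<close>)
  then show ?case using s by simp
qed

lemma down: assumes "k < i" "i + 2 \<le> r" "r \<le> n"
  shows "D3 (t (i - k)) (t (i+1)) (t r) = 0"
  using assms(1)
proof (induction k)
  case 0
  obtain k' where "r = i + 2 + k'" using assms(2) le_iff_add by blast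
  then show ?case using up[of i k'] assms by simp
next
  case (Suc k)
  define m where "m = i - Suc k"
  have IH: "D3 (t (m+1)) (t (i+1)) (t r) = 0" using Suc m_def by (simp add: Suc_diff_Suc)
  have s: "s_tr m (m+1) = m" "s_tr m (i+1) = i+1" "s_tr m r = r"
    unfolding s_tr_def m_def using Suc.prems assms by auto
  have "D3 (t (s_tr m (m+1))) (t (s_tr m (i+1))) (t (s_tr m r)) = 0"
    by (rule conjD[OF _ _ _ _ _ _ _ _ IH]) (use assms Suc.prems in \<open>auto simp: m_def\<close>)
  then show ?case using s by (simp add: m_def)
qed

lemma sorted3: assumes "1 \<le> p" "p < q" "q < r" "r \<le> n" shows "D3 (t p) (t q) (t r) = 0"
  using down[of "q - 1 - p" "q - 1" r] assms by simp

lemma sw12: assumes "1 \<le> x" "x \<le> n" "1 \<le> y" "y \<le> n" "1 \<le> z" "z \<le> n" "D3 (t x) (t y) (t z) = 0"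
  shows "D3 (t y) (t x) (t z) = 0"
  by (rule D3_swap12) (use assms in \<open>auto intro: tcomm\<close>)

lemma sw23: assumes "1 \<le> x" "x \<le> n" "1 \<le> y" "y \<le> n" "1 \<le> z" "z \<le> n" "D3 (t x) (t y) (t z) = 0"
  shows "D3 (t x) (t z) (t y) = 0"
  by (rule D3_swap23) (use assms in \<open>auto intro: tcomm\<close>)

lemma all3: assumes "1 \<le> i" "i \<le> n" "1 \<le> j" "j \<le> n" "1 \<le> k" "k \<le> n"
  shows "D3 (t i) (t j) (t k) = 0"
proof -
  consider "i = j \<or> i = k \<or> j = k" | "i < j" "j < k" | "j < i" "i < k" | "i < k" "k < j"
    | "k < i" "i < j" | "j < k" "k < i" | "k < j" "j < i" by linarith
  then show ?thesis
  proof cases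
    case 1 then show ?thesis unfolding D3_def by auto
  next
    case 2 then show ?thesis using sorted3 assms by auto
  next
    case 3 then show ?thesis using sorted3[of j i k] sw12[of j i k] assms by auto
  next
    case 4 then show ?thesis using sorted3[of i k j] sw23[of i k j] assms by auto
  next
    case 5 then show ?thesis using sorted3[of k i j] sw12[of k i j] sw23[of i k j] assms by auto
  next
    case 6 then show ?thesis using sorted3[of j k i] sw23[of j k i] sw12[of j i k] assms by auto
  next
    case 7 then show ?thesis using sorted3[of k j i] sw12[of k j i] sw23[of j k i] sw12[of j i k]
        assms by auto
  qed
qed

definition Rr where "Rr i j = (t j - t i) * (t j - t (i+1)) * (g i + 1)"

lemma conjR:
  assumes "1 \<le> i" "i \<le> n - 1" "1 \<le> m" "m \<le> n - 1" "m + 1 < i \<or> i + 1 < m" "1 \<le> j" "j \<le> n"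
    "Rr i j = 0"
  shows "Rr i (s_tr m j) = 0"
proof -
  have si: "s_tr m i = i" "s_tr m (i+1) = i+1" using assms(5) unfolding s_tr_def by auto
  have gg: "(g i + 1) * g m = g m * (g i + 1)"
    using far[of i m] assms by (auto simp: algebra_simps)
  have "Rr i j * g m = g m * Rr i (s_tr m j)"
  proof -
    have a: "t j * g m = g m * t (s_tr m j)" using tg[of m j] assms by simp
    have b: "t i * g m = g m * t i" using tg[of m i] si assms by simp
    have c: "t (i+1) * g m = g m * t (i+1)" using tg[of m "i+1"] si assms by simp
    show ?thesis unfolding Rr_def by (intro push_mult push_diff a b c gg)
  qed
  then have "g m * Rr i (s_tr m j) = 0" using assms(8) by simp
  then show ?thesis using cancel[OF assms(3,4)] by blast
qed

lemma upR: assumes "1 \<le> i" "i + 2 + k \<le> n" shows "Rr i (i+2+k) = 0"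
  using assms(2)
proof (induction k)
  case 0
  then show ?case using triple_at(2)[OF assms(1)] unfolding Rr_def by simp
next
  case (Suc k)
  define m where "m = i + 2 + k"
  have IH: "Rr i m = 0" using Suc m_def by simp
  have s: "s_tr m m = i + 2 + Suc k" unfolding s_tr_def m_def by auto
  have "Rr i (s_tr m m) = 0"
    by (rule conjR[OF _ _ _ _ _ _ _ IH]) (use assms Suc.prems in \<open>auto simp: m_def\<close>)
  then show ?case using s by simp
qed

lemma downR: assumes "k + 2 \<le> i" "i \<le> n - 1" shows "Rr i (i - 1 - k) = 0"
  using assms(1)
proof (induction k)
  case 0
  obtain i' where i': "i = Suc i'" using assms by (cases i) auto
  have "1 \<le> i'" "i' \<le> n - 2" using i' assms by auto
  note T = triple_at(3)[OF this]
  have e: "i - 1 - 0 = i'" "i' + 1 = i" "i' + 2 = i + 1" using i' by auto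
  show ?case unfolding Rr_def e using T by (simp only: e)
next
  case (Suc k)
  define m where "m = i - 2 - k"
  have IH: "Rr i (m+1) = 0" using Suc m_def by (simp add: Suc_diff_Suc)
  have s: "s_tr m (m+1) = m"
    unfolding s_tr_def by auto
  have "Rr i (s_tr m (m+1)) = 0"
    by (rule conjR[OF _ _ _ _ _ _ _ IH]) (use assms Suc.prems in \<open>auto simp: m_def\<close>)
  then show ?case using s by (simp add: m_def)
qed

lemma upR2: "1 \<le> i \<Longrightarrow> i + 2 + k \<le> n \<Longrightarrow>
  (t (i+2+k) - t i) * (t (i+2+k) - t (i+1)) * (g i + 1) = 0"
  using upR unfolding Rr_def by blast

lemma downR2: "k + 2 \<le> i \<Longrightarrow> i \<le> n - 1 \<Longrightarrow>
  (t (i - 1 - k) - t i) * (t (i - 1 - k) - t (i+1)) * (g i + 1) = 0"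
  using downR unfolding Rr_def by blast

end

theorem mainTheorem13:
  fixes phi :: "complex \<Rightarrow> 'a::ring_1" and u :: 'a
    and g t :: "nat \<Rightarrow> 'a" and d n :: nat
  assumes "d \<ge> 1" and "n \<ge> 3"
    and "laurent_alg phi u"
    and "YTL_rels phi u d n g t"
  shows "(\<forall>i j k. 1 \<le> i \<and> i \<le> n \<and> 1 \<le> j \<and> j \<le> n \<and> 1 \<le> k \<and> k \<le> n \<longrightarrow>
            (t i - t j) * (t i - t k) * (t j - t k) = 0) \<and>
         (\<forall>i j. 1 \<le> i \<and> i \<le> n - 1 \<and> 1 \<le> j \<and> j \<le> n \<longrightarrow>
            (t j - t i) * (t j - t (i+1)) * (g i + 1) = 0)"
proof (intro conjI allI impI)
  fix i j k assume "1 \<le> i \<and> i \<le> n \<and> 1 \<le> j \<and> j \<le> n \<and> 1 \<le> k \<and> k \<le> n"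
  then show "(t i - t j) * (t i - t k) * (t j - t k) = 0"
    using all3[OF assms] unfolding D3_def by blast
next
  fix i j assume h: "1 \<le> i \<and> i \<le> n - 1 \<and> 1 \<le> j \<and> j \<le> n"
  consider "j = i" | "j = i + 1" | "i + 2 \<le> j" | "j < i" by linarith
  then show "(t j - t i) * (t j - t (i+1)) * (g i + 1) = 0"
  proof cases
    case 3
    obtain k' where "j = i + 2 + k'" using 3 le_iff_add by blast
    then show ?thesis using upR2[OF assms, of i k'] h by simp
  next
    case 4
    have k: "(i - 1 - j) + 2 \<le> i" "i - 1 - (i - 1 - j) = j" using 4 h by auto
    show ?thesis using downR2[OF assms k(1)] h k(2) by simp
  qed auto
qed

end
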